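(* For all probability measures $P,Q$ and all $\gamma\in[1,\infty)$, $$E_\gamma(P\|Q)\le\tfrac12\Bigl[1-\gamma+\sqrt{(\gamma-1)^2+\frac{4\gamma\,\chi^2(P\|Q)}{1+\gamma+\chi^2(P\|Q)}}\,\Bigr],$$ $$E_\gamma(P\|Q)\le\tfrac12\Bigl[1-\gamma+\sqrt{(\gamma-1)^2+4\gamma\bigl(1-e^{-D(P\|Q)}\bigr)}\,\Bigr],$$ where $D(P\|Q)$ is measured in nats. In particular ($\gamma=1$), $|P-Q|\le 2\sqrt{1-e^{-D(P\|Q)}}$.
   Context: For densities $p,q$ w.r.t. a dominating measure $\mu$: $E_\gamma(P\|Q):=\int(p-\gamma q)^+\,\mathrm{d}\mu$; $|P-Q|:=\int|p-q|\,\mathrm{d}\mu=2E_1(P\|Q)$; $\chi^2(P\|Q):=\int\frac{(p-q)^2}{q}\,\mathrm{d}\mu$ (equal to $+\infty$ if $P\not\ll Q$); $D(P\|Q):=\int p\ln\frac pq\,\mathrm{d}\mu$ (relative entropy in nats, $+\infty$ if $P\not\ll Q$). *)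

theory Defs
  imports "HOL-Analysis.Analysis"
begin

text \<open>Densities p, q with respect to a dominating measure M.\<close>

definition is_prob_density :: "'a measure \<Rightarrow> ('a \<Rightarrow> real) \<Rightarrow> bool" where
  "is_prob_density M p \<longleftrightarrow> p \<in> borel_measurable M \<and> (\<forall>x\<in>space M. 0 \<le> p x)
      \<and> (\<integral>\<^sup>+ x. ennreal (p x) \<partial>M) = 1"

definition E_gamma :: "'a measure \<Rightarrow> real \<Rightarrow> ('a \<Rightarrow> real) \<Rightarrow> ('a \<Rightarrow> real) \<Rightarrow> ennreal" where
  "E_gamma M \<gamma> p q = (\<integral>\<^sup>+ x. ennreal (max 0 (p x - \<gamma> * q x)) \<partial>M)"

definition tv_dist :: "'a measure \<Rightarrow> ('a \<Rightarrow> real) \<Rightarrow> ('a \<Rightarrow> real) \<Rightarrow> ennreal" where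
  "tv_dist M p q = (\<integral>\<^sup>+ x. ennreal \<bar>p x - q x\<bar> \<partial>M)"

text \<open>chi^2(P||Q) = integral of (p-q)^2/q; the integrand is +infinity where q = 0 < p,
  so the value is +infinity when P is not absolutely continuous w.r.t. Q.\<close>
definition chi2 :: "'a measure \<Rightarrow> ('a \<Rightarrow> real) \<Rightarrow> ('a \<Rightarrow> real) \<Rightarrow> ennreal" where
  "chi2 M p q = (\<integral>\<^sup>+ x. (if q x = 0 then (if p x = 0 then 0 else \<infinity>)
                          else ennreal ((p x - q x)\<^sup>2 / q x)) \<partial>M)"

text \<open>Relative entropy D(P||Q) = integral of p ln(p/q) in nats, with conventions
  0 ln(0/q) = 0 and p ln(p/0) = +infinity for p > 0; the extended-real integral is
  the positive part minus the negative part.\<close>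
definition kl_integrand :: "('a \<Rightarrow> real) \<Rightarrow> ('a \<Rightarrow> real) \<Rightarrow> 'a \<Rightarrow> ereal" where
  "kl_integrand p q x = (if p x = 0 then 0 else if q x = 0 then \<infinity>
                          else ereal (p x * ln (p x / q x)))"

definition rel_entropy :: "'a measure \<Rightarrow> ('a \<Rightarrow> real) \<Rightarrow> ('a \<Rightarrow> real) \<Rightarrow> ereal" where
  "rel_entropy M p q =
     enn2ereal (\<integral>\<^sup>+ x. e2ennreal (max 0 (kl_integrand p q x)) \<partial>M)
   - enn2ereal (\<integral>\<^sup>+ x. e2ennreal (max 0 (- kl_integrand p q x)) \<partial>M)"

definition exp_neg_ereal :: "ereal \<Rightarrow> real" where
  "exp_neg_ereal d = (if d = \<infinity> then 0 else if d = -\<infinity> then 0 else exp (- real_of_ereal d))"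

definition chi2_ratio :: "real \<Rightarrow> ennreal \<Rightarrow> real" where
  "chi2_ratio \<gamma> c = (if c = \<infinity> then 1 else enn2real c / (1 + \<gamma> + enn2real c))"

end

theory Submission imports Defs begin

lemma dens_int:
  assumes "is_prob_density M p"
  shows "integrable M p" "integral\<^sup>L M p = 1" "p \<in> borel_measurable M" "AE x in M. 0 \<le> p x"
proof -
  have m: "p \<in> borel_measurable M" and nn: "\<And>x. x\<in>space M \<Longrightarrow> 0 \<le> p x"
    and i: "(\<integral>\<^sup>+ x. ennreal (p x) \<partial>M) = 1" using assms unfolding is_prob_density_def by auto
  show ae: "AE x in M. 0 \<le> p x" using nn by auto
  show int: "integrable M p" using integrableI_nn_integral_finite[OF m ae, of 1] i by simp
  have "ennreal (integral\<^sup>L M p) = 1" using nn_integral_eq_integral[OF int ae] i by simp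
  then show "integral\<^sup>L M p = 1"
    by (metis ennreal_1 ennreal_inj integral_nonneg_AE ae zero_le_one)
  show "p \<in> borel_measurable M" by fact
qed

lemma alg_sqrt:
  fixes e g r :: real
  assumes "0 \<le> e" "1 \<le> g" "e * (e + g - 1) \<le> g * r"
  shows "e \<le> (1 - g + sqrt ((g - 1)\<^sup>2 + 4 * g * r)) / 2"
proof -
  have "(2*e + g - 1)\<^sup>2 \<le> (g - 1)\<^sup>2 + 4 * g * r" using assms by (simp add: power2_eq_square algebra_simps)
  then have "sqrt ((2*e + g - 1)\<^sup>2) \<le> sqrt ((g - 1)\<^sup>2 + 4 * g * r)" by (rule real_sqrt_le_mono)
  moreover have "sqrt ((2*e + g - 1)\<^sup>2) = 2*e+g-1" using assms by simp
  ultimately show ?thesis by simp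
qed

lemma tang: "0 < (a::real) \<Longrightarrow> 2*l*b - l^2*a \<le> b^2/a"
proof -
  assume a: "0 < a"
  have "0 \<le> (b - l*a)^2 / a" using a by simp
  also have "(b - l*a)^2 / a = b^2/a - (2*l*b - l^2*a)" using a
    by (simp add: field_simps power2_eq_square)
  finally show ?thesis by simp
qed

lemma pointwise_chi:
  fixes p q g l m :: real
  assumes "0 \<le> p" "0 \<le> q" "1 \<le> g" "q = 0 \<longrightarrow> p = 0"
  defines "m0 \<equiv> max 0 (p - g*q)"
  defines "w \<equiv> (if q = 0 then 0 else (p - q)\<^sup>2 / q)"
  shows "2*l*p - l^2*(p - m0) + 2*m*p - m^2*(g*q + m0) \<le> p + (w + 2*p - q)/g"
proof (cases "q = 0")
  case True then show ?thesis using assms by simp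
next
  case False
  then have q0: "0 < q" using assms by simp
  have gq: "0 < g*q" using q0 assms by simp
  have key: "(w + 2*p - q)/g = p^2/(g*q)" using q0 assms False
    by (simp add: field_simps power2_eq_square)
  show ?thesis
  proof (cases "p \<le> g*q")
    case True
    then have "m0 = 0" unfolding m0_def by simp
    moreover have "2*l*p - l^2*p \<le> p" using assms(1)
    proof -
      have "0 \<le> p * (1 - l)^2" using assms(1) by simp
      then show ?thesis by (simp add: power2_eq_square algebra_simps)
    qed
    moreover have "2*m*p - m^2*(g*q) \<le> p^2/(g*q)" using tang[OF gq] .
    ultimately show ?thesis using key by simp
  next
    case False
    then have "m0 = p - g*q" unfolding m0_def by simp
    moreover have "2*m*p - m^2*p \<le> p" using assms(1)
    proof -
      have "0 \<le> p * (1 - m)^2" using assms(1) by simp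
      then show ?thesis by (simp add: power2_eq_square algebra_simps)
    qed
    moreover have "2*l*p - l^2*(g*q) \<le> p^2/(g*q)" using tang[OF gq] .
    ultimately show ?thesis using key by simp
  qed
qed


lemma pointwise_kl:
  fixes p q c :: real
  assumes "0 \<le> p" "0 \<le> q" "p \<noteq> 0 \<longrightarrow> q \<noteq> 0" "0 < c"
  defines "k \<equiv> (if p = 0 \<or> q = 0 then 0 else p * ln (p / q))"
  shows "max 0 (-k) - max 0 k \<le> 2*(p * ln c + sqrt (p*q) / c - p)"
proof (cases "p = 0")
  case True then show ?thesis by (simp add: k_def)
next
  case False
  then have p0: "0 < p" and q0: "0 < q" using assms by auto
  have lhs: "max 0 (-k) - max 0 k = - (p * (ln p - ln q))"
    using p0 q0 by (simp add: k_def ln_div)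
  define y where "y = sqrt (p*q) / (p*c)"
  have y0: "0 < y" using p0 q0 assms(4) by (simp add: y_def)
  have lny: "ln y = (ln p + ln q)/2 - ln p - ln c"
    using p0 q0 assms(4) by (simp add: y_def ln_div ln_mult ln_sqrt)
  have "p * ln y \<le> p * (y - 1)" using ln_le_minus_one[OF y0] p0 by (simp)
  moreover have "p * y = sqrt (p*q) / c" using p0 assms(4) by (simp add: y_def)
  ultimately have "p * ((ln p + ln q)/2 - ln p - ln c) \<le> sqrt (p*q) / c - p"
    using lny by (simp add: algebra_simps)
  then have "p * ((ln p + ln q)/2 - ln p - ln c) * 2 \<le> (sqrt (p*q) / c - p) * 2"
    by (rule mult_right_mono) simp_all
  moreover have "(sqrt (p*q) / c - p) * 2 = 2*(sqrt (p*q) / c) - 2 * p" by simp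
  moreover have "p * ((ln p + ln q)/2 - ln p - ln c) * 2 = p * ln q - p * ln p - 2 * (p * ln c)"
    by (simp add: field_simps)
  ultimately show ?thesis using lhs by (simp add: algebra_simps)
qed

lemma pointwise_hel:
  fixes p q g t :: real
  assumes "0 \<le> p" "0 \<le> q" "1 \<le> g"
  defines "m0 \<equiv> max 0 (p - g*q)"
  shows "2 * t * (sqrt g * sqrt (p*q)) \<le> t^2 * (p - m0) + (g*q + m0)"
proof -
  define u where "u = p - m0"
  define v where "v = g*q + m0"
  have u0: "0 \<le> u" and v0: "0 \<le> v" using assms by (auto simp: u_def v_def m0_def)
  have uv: "u * v = g * (p*q)" using assms
    by (cases "p \<le> g*q") (auto simp: u_def v_def m0_def max_def algebra_simps)
  have "sqrt g * sqrt (p*q) = sqrt u * sqrt v" using uv by (metis real_sqrt_mult)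
  moreover have "0 \<le> (t * sqrt u - sqrt v)^2" by simp
  then have "2 * t * (sqrt u * sqrt v) \<le> t^2 * u + v" using u0 v0
    by (simp add: power2_eq_square algebra_simps)
  ultimately show ?thesis by (simp add: u_def v_def)
qed

context
  fixes M :: "'a measure" and p q :: "'a \<Rightarrow> real" and g :: real
  assumes P: "is_prob_density M p" and Q: "is_prob_density M q" and g1: "1 \<le> g"
begin

lemma pm[measurable]: "p \<in> borel_measurable M" using dens_int[OF P] by simp
lemma qm[measurable]: "q \<in> borel_measurable M" using dens_int[OF Q] by simp
lemma pnn: "x \<in> space M \<Longrightarrow> 0 \<le> p x" using P unfolding is_prob_density_def by auto
lemma qnn: "x \<in> space M \<Longrightarrow> 0 \<le> q x" using Q unfolding is_prob_density_def by auto
lemma pint: "integrable M p" "integral\<^sup>L M p = 1" using dens_int[OF P] by auto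
lemma qint: "integrable M q" "integral\<^sup>L M q = 1" using dens_int[OF Q] by auto

definition "mm x = max 0 (p x - g * q x)"
lemma mm_m[measurable]: "mm \<in> borel_measurable M" unfolding mm_def by measurable

lemma mm_int: "integrable M mm"
  by (rule Bochner_Integration.integrable_bound[OF pint(1)]) (use pnn qnn g1 in \<open>auto simp: mm_def\<close>)

definition "ee = integral\<^sup>L M mm"

lemma E_eq: "E_gamma M g p q = ennreal ee" "0 \<le> ee" "ee \<le> 1"
proof -
  show "E_gamma M g p q = ennreal ee" unfolding E_gamma_def ee_def
    using nn_integral_eq_integral[OF mm_int] by (simp add: mm_def)
  show "0 \<le> ee" unfolding ee_def by (rule integral_nonneg_AE) (auto simp: mm_def)
  have "ee \<le> integral\<^sup>L M p" unfolding ee_def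
    by (rule integral_mono[OF mm_int pint(1)]) (use pnn qnn g1 in \<open>auto simp: mm_def\<close>)
  then show "ee \<le> 1" using pint by simp
qed

lemma u_int: "(\<integral>x. p x - mm x \<partial>M) = 1 - ee"
  using pint mm_int by (simp add: ee_def)
lemma v_int: "(\<integral>x. g * q x + mm x \<partial>M) = g + ee"
  using qint mm_int by (simp add: ee_def)


lemma ee_bound: "ee * (ee + g - 1) \<le> g"
proof -
  have "ee * (ee + g - 1) \<le> 1 * (1 + g - 1)"
    using E_eq g1 by (intro mult_mono) auto
  then show ?thesis by simp
qed

definition "ww x = (if q x = 0 then 0 else (p x - q x)\<^sup>2 / q x)"
lemma ww_m[measurable]: "ww \<in> borel_measurable M" unfolding ww_def by measurable

lemma chi_part: "ee * (ee + g - 1) \<le> g * chi2_ratio g (chi2 M p q)"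
proof (cases "chi2 M p q = \<infinity>")
  case True
  then show ?thesis using ee_bound by (simp add: chi2_ratio_def)
next
  case False
  define F where "F x = (if q x = 0 then (if p x = 0 then 0 else \<infinity>)
                          else ennreal ((p x - q x)\<^sup>2 / q x))" for x
  have Fm: "F \<in> borel_measurable M" unfolding F_def by measurable
  have chiF: "chi2 M p q = integral\<^sup>N M F" unfolding chi2_def F_def by simp
  have AEF: "AE x in M. F x \<noteq> \<infinity>" using nn_integral_PInf_AE[OF Fm] False chiF by simp
  have AEpq: "AE x in M. q x = 0 \<longrightarrow> p x = 0" using AEF by eventually_elim (auto simp: F_def split: if_splits)
  have "AE x in M. F x = ennreal (ww x)" using AEpq by eventually_elim (auto simp: F_def ww_def)
  then have chiw: "chi2 M p q = (\<integral>\<^sup>+ x. ennreal (ww x) \<partial>M)" using chiF by (simp add: nn_integral_cong_AE)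
  have wnn: "AE x in M. 0 \<le> ww x" using qnn by (auto simp: ww_def)
  have "chi2 M p q = ennreal (enn2real (chi2 M p q))" using False by (simp add: less_top)
  then have wint: "integrable M ww" using integrableI_nn_integral_finite[OF ww_m wnn] chiw by metis
  have "chi2 M p q = ennreal (integral\<^sup>L M ww)" using chiw nn_integral_eq_integral[OF wint wnn] by simp
  moreover have c0: "0 \<le> integral\<^sup>L M ww" using wnn by (rule integral_nonneg_AE)
  ultimately have cr: "chi2_ratio g (chi2 M p q) = integral\<^sup>L M ww / (1 + g + integral\<^sup>L M ww)"
    using False by (simp add: chi2_ratio_def)
  define c where "c = integral\<^sup>L M ww"
  define e where "e = ee"
  have e01: "0 \<le> e" "e \<le> 1" using E_eq by (auto simp: e_def)
  have key: "2*l - l^2*(1 - e) + 2*m - m^2*(g + e) \<le> 1 + (c + 1)/g" for l m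
  proof -
    have "(\<integral>x. 2*l*p x - l^2*(p x - mm x) + 2*m*p x - m^2*(g*q x + mm x) \<partial>M)
        \<le> (\<integral>x. p x + (ww x + 2*p x - q x)/g \<partial>M)"
    proof (rule integral_mono_AE)
      show "AE x in M. 2*l*p x - l^2*(p x - mm x) + 2*m*p x - m^2*(g*q x + mm x)
        \<le> p x + (ww x + 2*p x - q x)/g"
        using AEpq AE_space
      proof eventually_elim
        case (elim x)
        show ?case unfolding mm_def ww_def
          by (rule pointwise_chi) (use elim pnn qnn g1 in auto)
      qed
    qed (use pint qint mm_int wint in auto)
    also have "(\<integral>x. 2*l*p x - l^2*(p x - mm x) + 2*m*p x - m^2*(g*q x + mm x) \<partial>M)
       = 2*l - l^2*(1 - e) + 2*m - m^2*(g + e)"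
      using pint qint mm_int u_int v_int by (simp add: e_def)
    also have "(\<integral>x. p x + (ww x + 2*p x - q x)/g \<partial>M) = 1 + (c + 1)/g"
      using pint qint mm_int wint by (simp add: c_def)
    finally show ?thesis .
  qed
  have S0: "0 < 1 + (c + 1)/g" using c0 g1 by (simp add: c_def add_pos_nonneg)
  have e1: "e < 1"
  proof (rule ccontr)
    assume "\<not> e < 1"
    then have "e = 1" using e01 by simp
    then have "2*(1 + (c + 1)/g) + 2*(1/(g+1)) - (1/(g+1))^2*(g + 1) \<le> 1 + (c + 1)/g"
      using key[of "1 + (c + 1)/g" "1/(g+1)"] by simp
    moreover have "0 \<le> 2*(1/(g+1)) - (1/(g+1))^2*(g + 1)" using g1
      by (simp add: power2_eq_square field_simps)
    ultimately show False using S0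
      by (smt (verit))
  qed
  have "2*(1/(1-e)) - (1/(1-e))^2*(1 - e) + 2*(1/(g+e)) - (1/(g+e))^2*(g + e) \<le> 1 + (c + 1)/g"
    by (rule key)
  moreover have "2*(1/(1-e)) - (1/(1-e))^2*(1 - e) = 1/(1-e)"
  proof -
    have "(1/(1-e))^2*(1 - e) = 1/(1-e)" using e1 by (simp add: power2_eq_square)
    then show ?thesis by simp
  qed
  moreover have "2*(1/(g+e)) - (1/(g+e))^2*(g + e) = 1/(g+e)"
  proof -
    have "g + e \<noteq> 0" using e01 g1 by simp
    then have "(1/(g+e))^2*(g + e) = 1/(g+e)" by (simp add: power2_eq_square)
    then show ?thesis by simp
  qed
  ultimately have H: "1/(1-e) + 1/(g+e) \<le> 1 + (c + 1)/g" by simp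
  have pa: "0 < 1 - e" "0 < g + e" "0 < g" using e1 e01 g1 by auto
  have "(1/(1-e) + 1/(g+e)) * ((1-e)*(g+e)*g) \<le> (1 + (c + 1)/g) * ((1-e)*(g+e)*g)"
    using H pa by (intro mult_right_mono) auto
  moreover have "(1/(1-e) + 1/(g+e)) * ((1-e)*(g+e)*g) = g*(1+g)"
  proof -
    have n1: "1 - e \<noteq> 0" "g + e \<noteq> 0" using pa by auto
    have "(1/(1-e) + 1/(g+e)) * ((1-e)*(g+e)*g) = (g+e)*g + (1-e)*g"
      using n1 by (simp add: distrib_right)
    then show ?thesis by (simp add: algebra_simps)
  qed
  moreover have "(1 + (c + 1)/g) * ((1-e)*(g+e)*g) = (1-e)*(g+e)*(g+c+1)" using pa
    by (simp add: field_simps)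
  ultimately have "g*(1+g) \<le> (1-e)*(g+e)*(g+c+1)" by simp
  then have "e*(e+g-1)*(1+g+c) \<le> g*c" by (simp add: algebra_simps)
  then have "e*(e+g-1) \<le> g*c/(1+g+c)" using c0 g1 by (simp add: c_def field_simps)
  then show ?thesis using cr by (simp add: c_def e_def)
qed

definition "sq x = sqrt (p x * q x)"
lemma sq_m[measurable]: "sq \<in> borel_measurable M" unfolding sq_def by measurable
lemma sq_int: "integrable M sq"
proof (rule Bochner_Integration.integrable_bound[of M "\<lambda>x. p x + q x"])
  show "integrable M (\<lambda>x. p x + q x)" using pint qint by auto
  show "AE x in M. norm (sq x) \<le> norm (p x + q x)"
  proof (rule AE_I2)
    fix x assume x: "x \<in> space M"
    have "sq x \<le> (p x + q x)/2" unfolding sq_def by (rule arith_geo_mean_sqrt) (use pnn qnn x in auto)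
    then show "norm (sq x) \<le> norm (p x + q x)" using pnn[OF x] qnn[OF x] by (simp add: sq_def)
  qed
qed simp

definition "BC = integral\<^sup>L M sq"
lemma BC0: "0 \<le> BC" unfolding BC_def
  by (rule integral_nonneg_AE, rule AE_I2) (simp add: sq_def pnn qnn)

lemma hel_part: "ee * (ee + g - 1) \<le> g * (1 - BC^2)"
proof -
  define X where "X = sqrt g * BC"
  define e where "e = ee"
  have e01: "0 \<le> e" "e \<le> 1" using E_eq by (auto simp: e_def)
  have X0: "0 \<le> X" using BC0 g1 by (simp add: X_def)
  have key: "2 * t * X \<le> t^2 * (1 - e) + (g + e)" for t
  proof -
    have "(\<integral>x. 2 * t * (sqrt g * sq x) \<partial>M) \<le> (\<integral>x. t^2 * (p x - mm x) + (g * q x + mm x) \<partial>M)"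
    proof (rule integral_mono_AE)
      show "AE x in M. 2 * t * (sqrt g * sq x) \<le> t^2 * (p x - mm x) + (g * q x + mm x)"
      proof (rule AE_I2)
        fix x assume x: "x \<in> space M"
        show "2 * t * (sqrt g * sq x) \<le> t^2 * (p x - mm x) + (g * q x + mm x)"
          unfolding sq_def mm_def by (rule pointwise_hel) (use pnn qnn x g1 in auto)
      qed
    qed (use pint qint mm_int sq_int in auto)
    also have "(\<integral>x. 2 * t * (sqrt g * sq x) \<partial>M) = 2 * t * X"
      using sq_int by (simp add: X_def BC_def)
    also have "(\<integral>x. t^2 * (p x - mm x) + (g * q x + mm x) \<partial>M) = t^2 * (1 - e) + (g + e)"
      using pint qint mm_int u_int v_int by (simp add: e_def)
    finally show ?thesis .
  qed
  have X2: "X^2 \<le> (1 - e) * (g + e)"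
  proof (cases "e < 1")
    case True
    have "2 * (X/(1-e)) * X \<le> (X/(1-e))^2 * (1 - e) + (g + e)" by (rule key)
    moreover have "2 * (X/(1-e)) * X = 2 * (X*X/(1-e))" by simp
    moreover have "(X/(1-e))^2 * (1 - e) = X*X/(1-e)" using True by (simp add: power2_eq_square)
    ultimately have "X*X/(1-e) \<le> g + e" by linarith
    then have "X^2/(1-e) \<le> g + e" by (simp add: power2_eq_square)
    then show ?thesis using True by (simp add: field_simps)
  next
    case False
    then have e1: "e = 1" using e01 by simp
    have "X = 0"
    proof (rule ccontr)
      assume "X \<noteq> 0"
      then have Xp: "0 < X" using X0 by simp
      have "2 * ((g+1)/X) * X \<le> ((g+1)/X)^2 * (1 - e) + (g + e)" by (rule key)
      then have "2 * (g+1) \<le> g + 1" using Xp e1 by simp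
      then show False using g1 by simp
    qed
    then show ?thesis using e1 by simp
  qed
  have "X^2 = g * BC^2" using g1 by (simp add: X_def power_mult_distrib)
  then have "g * BC^2 \<le> g - e * (e + g - 1)" using X2 by (simp add: algebra_simps)
  then show ?thesis by (simp add: e_def algebra_simps)
qed

definition "kk x = (if p x = 0 \<or> q x = 0 then 0 else p x * ln (p x / q x))"
lemma kk_m[measurable]: "kk \<in> borel_measurable M" unfolding kk_def by measurable

lemma kl_part: "ee * (ee + g - 1) \<le> g * (1 - exp_neg_ereal (rel_entropy M p q))"
proof (cases "rel_entropy M p q")
  case PInf then show ?thesis using ee_bound by (simp add: exp_neg_ereal_def)
next
  case MInf then show ?thesis using ee_bound by (simp add: exp_neg_ereal_def)
next
  case (real d)
  define pos where "pos = (\<integral>\<^sup>+ x. e2ennreal (max 0 (kl_integrand p q x)) \<partial>M)"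
  define neg where "neg = (\<integral>\<^sup>+ x. e2ennreal (max 0 (- kl_integrand p q x)) \<partial>M)"
  have D: "enn2ereal pos - enn2ereal neg = ereal d" using real by (simp add: rel_entropy_def pos_def neg_def)
  have posf: "pos \<noteq> \<infinity>"
  proof
    assume "pos = \<infinity>"
    then show False using D by (cases "enn2ereal neg") auto
  qed
  have negf: "neg \<noteq> \<infinity>"
  proof
    assume "neg = \<infinity>"
    then show False using D posf by (cases "enn2ereal pos") auto
  qed
  have klm: "kl_integrand p q \<in> borel_measurable M" unfolding kl_integrand_def by measurable
  have "AE x in M. e2ennreal (max 0 (kl_integrand p q x)) \<noteq> \<infinity>"
    by (rule nn_integral_PInf_AE) (use klm posf in \<open>auto simp: pos_def\<close>)
  then have AEpq: "AE x in M. p x \<noteq> 0 \<longrightarrow> q x \<noteq> 0"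
    by eventually_elim (auto simp: kl_integrand_def split: if_splits)
  have AEk: "AE x in M. kl_integrand p q x = ereal (kk x)"
    using AEpq by eventually_elim (auto simp: kl_integrand_def kk_def)
  have posk: "pos = (\<integral>\<^sup>+ x. ennreal (max 0 (kk x)) \<partial>M)"
    unfolding pos_def by (rule nn_integral_cong_AE) (use AEk in \<open>eventually_elim, simp add: max_def zero_ennreal_def[symmetric] flip: e2ennreal_ereal zero_ereal_def\<close>)
  have negk: "neg = (\<integral>\<^sup>+ x. ennreal (max 0 (- kk x)) \<partial>M)"
    unfolding neg_def by (rule nn_integral_cong_AE) (use AEk in \<open>eventually_elim, simp add: max_def zero_ennreal_def[symmetric] flip: e2ennreal_ereal zero_ereal_def\<close>)
  have ip: "integrable M (\<lambda>x. max 0 (kk x))"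
    using integrableI_nn_integral_finite[of "\<lambda>x. max 0 (kk x)" M "enn2real pos"] posk posf
    by (simp add: less_top)
  have ineg: "integrable M (\<lambda>x. max 0 (- kk x))"
    using integrableI_nn_integral_finite[of "\<lambda>x. max 0 (- kk x)" M "enn2real neg"] negk negf
    by (simp add: less_top)
  have posr: "pos = ennreal (\<integral>x. max 0 (kk x) \<partial>M)" using posk nn_integral_eq_integral[OF ip] by simp
  have negr: "neg = ennreal (\<integral>x. max 0 (- kk x) \<partial>M)" using negk nn_integral_eq_integral[OF ineg] by simp
  have dd: "d = (\<integral>x. max 0 (kk x) \<partial>M) - (\<integral>x. max 0 (- kk x) \<partial>M)"
    using D posr negr by simp
  define c where "c = exp (- d / 2)"
  have c0: "0 < c" by (simp add: c_def)
  have "(\<integral>x. max 0 (- kk x) - max 0 (kk x) \<partial>M) \<le> (\<integral>x. 2*(p x * ln c + sq x / c - p x) \<partial>M)"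
  proof (rule integral_mono_AE)
    show "AE x in M. max 0 (- kk x) - max 0 (kk x) \<le> 2*(p x * ln c + sq x / c - p x)"
      using AEpq AE_space
    proof eventually_elim
      case (elim x)
      show ?case unfolding kk_def sq_def by (rule pointwise_kl) (use elim pnn qnn c0 in auto)
    qed
  qed (use pint sq_int ip ineg in auto)
  also have "(\<integral>x. max 0 (- kk x) - max 0 (kk x) \<partial>M) = - d" using dd ip ineg by simp
  also have "(\<integral>x. 2*(p x * ln c + sq x / c - p x) \<partial>M) = 2 * (ln c + BC / c - 1)"
    using pint sq_int by (simp add: BC_def)
  finally have "- d \<le> 2 * (ln c + BC / c - 1)" .
  moreover have "ln c = - d / 2" by (simp add: c_def)
  ultimately have "1 \<le> BC / c" by simp
  then have cBC: "c \<le> BC" using c0 by (simp add: field_simps)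
  have "exp_neg_ereal (rel_entropy M p q) = c^2"
    using real by (simp add: exp_neg_ereal_def c_def power2_eq_square flip: exp_add)
  also have "c^2 \<le> BC^2" using cBC c0 by (simp add: power_mono)
  finally have "g * (1 - BC^2) \<le> g * (1 - exp_neg_ereal (rel_entropy M p q))" using g1 by simp
  then show ?thesis using hel_part by linarith
qed

lemma tv_in:
  assumes "g = 1"
  shows "tv_dist M p q \<le> ennreal (2 * sqrt (1 - exp_neg_ereal (rel_entropy M p q)))"
proof -
  have ai: "integrable M (\<lambda>x. \<bar>p x - q x\<bar>)" using pint qint by auto
  have "AE x in M. \<bar>p x - q x\<bar> = 2 * mm x + q x - p x"
    unfolding mm_def using assms by (intro AE_I2) (auto simp: abs_if max_def)
  then have "(\<integral>x. \<bar>p x - q x\<bar> \<partial>M) = (\<integral>x. 2 * mm x + q x - p x \<partial>M)"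
    by (intro integral_cong_AE) simp_all
  also have "\<dots> = 2 * ee" using mm_int pint qint by (simp add: ee_def)
  finally have "tv_dist M p q = ennreal (2 * ee)" unfolding tv_dist_def
    using nn_integral_eq_integral[OF ai] by simp
  moreover have "ee \<le> sqrt (1 - exp_neg_ereal (rel_entropy M p q))"
  proof -
    have "ee^2 \<le> 1 - exp_neg_ereal (rel_entropy M p q)" using kl_part assms
      by (simp add: power2_eq_square)
    then have "sqrt (ee^2) \<le> sqrt (1 - exp_neg_ereal (rel_entropy M p q))" by (rule real_sqrt_le_mono)
    then show ?thesis using E_eq by simp
  qed
  ultimately show ?thesis by (simp add: ennreal_leI)
qed

lemma main_in:
  "E_gamma M g p q \<le> ennreal ((1 - g + sqrt ((g - 1)\<^sup>2 + 4 * g * chi2_ratio g (chi2 M p q))) / 2)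
     \<and> E_gamma M g p q \<le> ennreal ((1 - g + sqrt ((g - 1)\<^sup>2 + 4 * g * (1 - exp_neg_ereal (rel_entropy M p q)))) / 2)"
  using alg_sqrt[OF E_eq(2) g1 chi_part] alg_sqrt[OF E_eq(2) g1 kl_part] E_eq(1)
  by (simp add: ennreal_leI)

end

theorem corollary3:
  fixes M :: "'a measure" and p q :: "'a \<Rightarrow> real" and \<gamma> :: real
  assumes "is_prob_density M p" and "is_prob_density M q" and "1 \<le> \<gamma>"
  shows "E_gamma M \<gamma> p q \<le> ennreal ((1 - \<gamma> + sqrt ((\<gamma> - 1)\<^sup>2 + 4 * \<gamma> * chi2_ratio \<gamma> (chi2 M p q))) / 2)
     \<and> E_gamma M \<gamma> p q \<le> ennreal ((1 - \<gamma> + sqrt ((\<gamma> - 1)\<^sup>2 + 4 * \<gamma> * (1 - exp_neg_ereal (rel_entropy M p q)))) / 2)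
     \<and> tv_dist M p q \<le> ennreal (2 * sqrt (1 - exp_neg_ereal (rel_entropy M p q)))"
  using main_in[OF assms] tv_in[OF assms(1,2), of 1] by simp

end
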